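(* Let $(u_1,v_1)$ and $(u_2,v_2)$ be two decompositions of the $\omega$-word $uv^\omega$. If $(u_1,v_1)$ and $(u_2,v_2)$ have the same smallest period $y$, then they have the same shortest form $(x,y)$, with $u_1=xy^i$ and $u_2=xy^j$ for some $i,j\geq0$.
   Context: A decomposition of an $\omega$-word $w$ is a pair $(u,v)$ with $u\in\Sigma^*$, $v\in\Sigma^+$ and $w=uv^\omega$. Write $r\unlhd v$ if $r$ is a nonempty prefix of $v$, and $r\lhd v$ if moreover $r\neq v$. A smallest period of $(u,v)$ is a word $r$ with $r\unlhd v$, $r^\omega=v^\omega$, and $t^\omega\neq r^\omega$ for every $t\lhd r$. If $y$ is the smallest period of $(u,v)$, the shortest form of $(u,v)$ is the pair $(x,y)$ where $u=xy^i$, $v=y^j$ for some $i\geq0,j\geq1$ and $x$ is such that every $x'$ with $u=x'y^k$ ($0\le k\le i$) satisfies $x'=xy^{i-k}$ (i.e., $x$ is the shortest word with $u\in xy^*$). *)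

theory Defs
  imports Main
begin

(* finite words: lists; omega-words: functions nat => 'a *)

definition wpow :: "'a list \<Rightarrow> nat \<Rightarrow> 'a list" where
  "wpow y i = concat (replicate i y)"

(* the omega-word u v^omega (meaningful for v \<noteq> []) *)
definition omega :: "'a list \<Rightarrow> 'a list \<Rightarrow> nat \<Rightarrow> 'a" where
  "omega u v = (\<lambda>n. if n < length u then u ! n else v ! ((n - length u) mod length v))"

definition decomposition :: "(nat \<Rightarrow> 'a) \<Rightarrow> 'a list \<Rightarrow> 'a list \<Rightarrow> bool" where
  "decomposition w u v \<longleftrightarrow> v \<noteq> [] \<and> w = omega u v"

definition npref :: "'a list \<Rightarrow> 'a list \<Rightarrow> bool" where
  "npref r v \<longleftrightarrow> r \<noteq> [] \<and> (\<exists>z. v = r @ z)"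

definition nspref :: "'a list \<Rightarrow> 'a list \<Rightarrow> bool" where
  "nspref r v \<longleftrightarrow> npref r v \<and> r \<noteq> v"

definition smallest_period :: "'a list \<Rightarrow> 'a list \<Rightarrow> 'a list \<Rightarrow> bool" where
  "smallest_period u v r \<longleftrightarrow>
     npref r v \<and> omega [] r = omega [] v \<and> (\<forall>t. nspref t r \<longrightarrow> omega [] t \<noteq> omega [] r)"

definition shortest_form :: "'a list \<Rightarrow> 'a list \<Rightarrow> 'a list \<Rightarrow> 'a list \<Rightarrow> bool" where
  "shortest_form u v x y \<longleftrightarrow>
     smallest_period u v y \<and>
     (\<exists>i j. j \<ge> 1 \<and> u = x @ wpow y i \<and> v = wpow y j) \<and>
     (\<forall>x' k. u = x' @ wpow y k \<longrightarrow> length x \<le> length x')"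

end

theory Submission
  imports Defs
begin

lemma omega_split: "omega u v n = (if n < length u then u ! n else omega [] v (n - length u))"
  by (simp add: omega_def)

lemma omega0: "omega [] v n = v ! (n mod length v)"
  by (simp add: omega_def)

lemma omega0_per: "v \<noteq> [] \<Longrightarrow> omega [] v (n + length v * k) = omega [] v n"
  by (simp add: omega0)

lemma wpow_Suc: "wpow y (Suc i) = y @ wpow y i"
  by (simp add: wpow_def)

lemma wpow_add: "wpow y (i + j) = wpow y i @ wpow y j"
  by (simp add: wpow_def replicate_add)

lemma length_wpow: "length (wpow y i) = i * length y"
  by (induct i) (auto simp: wpow_def)

lemma omega_app_y: assumes "y \<noteq> []" shows "omega (x @ y) y = omega x y"
proof
  fix n
  show "omega (x @ y) y n = omega x y n"
  proof (cases "n < length x + length y")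
    case True then show ?thesis
      by (auto simp: omega_def nth_append)
  next
    case False
    then have "n - length x = (n - length x - length y) + length y * 1" by simp
    then have "(n - length x) mod length y = (n - length x - length y) mod length y"
      by (metis mod_mult_self1 mult.commute)
    with False show ?thesis by (auto simp: omega_def nth_append)
  qed
qed

lemma omega_wpow: assumes "y \<noteq> []" shows "omega (x @ wpow y i) y = omega x y"
  using assms
proof (induct i arbitrary: x)
  case 0 then show ?case by (simp add: wpow_def)
next
  case (Suc i)
  have "omega (x @ wpow y (Suc i)) y = omega ((x @ y) @ wpow y i) y" by (simp add: wpow_Suc)
  also have "\<dots> = omega (x @ y) y" using Suc by blast
  also have "\<dots> = omega x y" using omega_app_y[OF Suc.prems] .
  finally show ?case .
qed

lemma wpow_nth: assumes "y \<noteq> []" "k < length (wpow y m)"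
  shows "wpow y m ! k = omega [] y k"
proof -
  have "omega (wpow y m) y k = wpow y m ! k" using assms(2) by (simp add: omega_def)
  moreover have "omega (wpow y m) y = omega [] y" using omega_wpow[OF assms(1), of "[]" m] by simp
  ultimately show ?thesis by simp
qed

lemma eq_wpow: assumes "y \<noteq> []" "length s = m * length y" "\<forall>k < length s. s ! k = omega [] y k"
  shows "s = wpow y m"
proof (rule nth_equalityI)
  show "length s = length (wpow y m)" using assms(2) by (simp add: length_wpow)
  fix i assume "i < length s"
  then show "s ! i = wpow y m ! i"
    using assms wpow_nth[OF assms(1), of i m] by (simp add: length_wpow)
qed

lemma per_iter: fixes W :: "nat \<Rightarrow> 'a" assumes "\<forall>n. W (n + r) = W n" shows "W (n + r * k) = W n"
proof (induct k)
  case 0 then show ?case by simp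
next
  case (Suc k)
  have "W (n + r * Suc k) = W ((n + r * k) + r)" by (simp add: algebra_simps)
  also have "\<dots> = W (n + r * k)" using assms by blast
  finally show ?case using Suc by simp
qed

lemma period_dvd:
  assumes y: "y \<noteq> []" and prim: "\<forall>t. nspref t y \<longrightarrow> omega [] t \<noteq> omega [] y"
    and per: "\<forall>n. omega [] y (n + p) = omega [] y n"
  shows "length y dvd p"
proof (rule ccontr)
  assume nd: "\<not> length y dvd p"
  define W where "W = omega [] y"
  define r where "r = p mod length y"
  have r0: "r > 0" using nd by (simp add: r_def dvd_eq_mod_eq_0)
  have rl: "r < length y" using y by (simp add: r_def)
  have rper: "\<forall>n. W (n + r) = W n"
  proof
    fix n
    have "W (n + r) = W (n + r + length y * (p div length y))"
      using omega0_per[OF y] by (simp add: W_def)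
    also have "n + r + length y * (p div length y) = n + p" by (simp add: r_def)
    also have "W (n + p) = W n" using per by (simp add: W_def)
    finally show "W (n + r) = W n" .
  qed
  define t where "t = take r y"
  have tl: "length t = r" using rl by (simp add: t_def)
  have "nspref t y"
  proof -
    have a: "y = t @ drop r y" by (simp add: t_def)
    have b: "t \<noteq> []" using tl r0 by auto
    have c: "t \<noteq> y" using tl rl by auto
    show ?thesis unfolding nspref_def npref_def using a b c by blast
  qed
  moreover have "omega [] t = omega [] y"
  proof
    fix n
    have "omega [] t n = t ! (n mod r)" by (simp add: omega0 tl)
    also have "\<dots> = y ! (n mod r)" using r0 by (simp add: t_def)
    also have "\<dots> = W (n mod r)"
    proof -
      have "n mod r < length y" using r0 rl by (meson mod_less_divisor less_trans)
      then show ?thesis by (simp add: W_def omega0)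
    qed
    also have "\<dots> = W (n mod r + r * (n div r))" using per_iter[OF rper, of "n mod r" "n div r"] by (rule sym)
    also have "n mod r + r * (n div r) = n" by simp
    finally show "omega [] t n = omega [] y n" by (simp add: W_def)
  qed
  ultimately show False using prim by blast
qed

lemma sp_prim: "smallest_period u v y \<Longrightarrow> y \<noteq> [] \<and> (\<forall>t. nspref t y \<longrightarrow> omega [] t \<noteq> omega [] y)"
  by (auto simp: smallest_period_def npref_def)

lemma sp_wpow:
  assumes "smallest_period u v y" shows "\<exists>j. j \<ge> 1 \<and> v = wpow y j"
proof -
  from assms have y: "y \<noteq> []" and prim: "\<forall>t. nspref t y \<longrightarrow> omega [] t \<noteq> omega [] y"
    using sp_prim by blast+
  from assms obtain z where v: "v = y @ z" and eq: "omega [] y = omega [] v"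
    by (auto simp: smallest_period_def npref_def)
  have vne: "v \<noteq> []" using v y by simp
  have "\<forall>n. omega [] y (n + length v) = omega [] y n"
    using omega0_per[OF vne, of _ 1] eq by simp
  then have "length y dvd length v" using period_dvd[OF y prim] by blast
  then obtain j where j: "length v = length y * j" by blast
  have j1: "j \<ge> 1" using j vne by (cases j) auto
  have "v = wpow y j"
  proof (rule eq_wpow[OF y])
    show "length v = j * length y" using j by simp
    show "\<forall>k<length v. v ! k = omega [] y k" using eq by (simp add: omega0)
  qed
  with j1 show ?thesis by blast
qed

lemma shortest_exists:
  "\<exists>x i. u = x @ wpow y i \<and> (\<forall>x' k. u = x' @ wpow y k \<longrightarrow> length x \<le> length x')"
proof -
  define S where "S = {x. \<exists>k. u = x @ wpow y k}"
  have "u \<in> S" by (auto simp: S_def wpow_def intro: exI[of _ 0])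
  then obtain x where xS: "x \<in> S" and m: "\<forall>x'\<in>S. length x \<le> length x'"
    using ex_has_least_nat[of "\<lambda>x. x \<in> S" u length] by blast
  from xS m show ?thesis unfolding S_def by blast
qed

lemma key:
  assumes y: "y \<noteq> []" and prim: "\<forall>t. nspref t y \<longrightarrow> omega [] t \<noteq> omega [] y"
    and u2: "u2 = x2 @ wpow y i2"
    and min2: "\<forall>x' k. u2 = x' @ wpow y k \<longrightarrow> length x2 \<le> length x'"
    and eq: "omega x1 y = omega x2 y" and le: "length x1 \<le> length x2"
  shows "x1 = x2"
proof -
  have pre: "\<forall>n < length x1. x1 ! n = x2 ! n"
  proof (intro allI impI)
    fix n assume n: "n < length x1"
    then have n2: "n < length x2" using le by simp
    have "x1 ! n = omega x1 y n" using n by (simp add: omega_def)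
    also have "\<dots> = omega x2 y n" using eq by simp
    also have "\<dots> = x2 ! n" using n2 by (simp add: omega_def)
    finally show "x1 ! n = x2 ! n" .
  qed
  define z where "z = drop (length x1) x2"
  have x2: "x2 = x1 @ z"
  proof -
    have "take (length x1) x2 = x1"
      by (rule nth_equalityI) (use le pre in auto)
    then show ?thesis unfolding z_def by (metis append_take_drop_id)
  qed
  have W: "\<And>n. omega x1 y (length x1 + n) = omega [] y n"
    by (simp add: omega_def)
  have W2: "\<And>n. omega x2 y (length x2 + n) = omega [] y n"
    by (simp add: omega_def)
  have "\<forall>n. omega [] y (n + length z) = omega [] y n"
  proof
    fix n
    have "omega [] y (n + length z) = omega x1 y (length x1 + (n + length z))" using W by simp
    also have "\<dots> = omega x2 y (length x2 + n)" using eq x2 by (simp add: algebra_simps)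
    also have "\<dots> = omega [] y n" using W2 by simp
    finally show "omega [] y (n + length z) = omega [] y n" .
  qed
  then have "length y dvd length z" using period_dvd[OF y prim] by blast
  then obtain m where m: "length z = length y * m" by blast
  have "z = wpow y m"
  proof (rule eq_wpow[OF y])
    show "length z = m * length y" using m by simp
    show "\<forall>k<length z. z ! k = omega [] y k"
    proof (intro allI impI)
      fix k assume "k < length z"
      have "z ! k = omega x2 y (length x1 + k)" using \<open>k < length z\<close> x2
        by (simp add: omega_def nth_append)
      also have "\<dots> = omega [] y k" using W[of k] eq by simp
      finally show "z ! k = omega [] y k" .
    qed
  qed
  then have "u2 = x1 @ wpow y (m + i2)" using u2 x2 by (simp add: wpow_add)
  then have "length x2 \<le> length x1" using min2 by blast
  then show ?thesis using x2 by simp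
qed

theorem corollary1:
  fixes u v u1 v1 u2 v2 y :: "'a list"
  assumes "v \<noteq> []"
    and "decomposition (omega u v) u1 v1"
    and "decomposition (omega u v) u2 v2"
    and "smallest_period u1 v1 y"
    and "smallest_period u2 v2 y"
  shows "\<exists>x i j. shortest_form u1 v1 x y \<and> shortest_form u2 v2 x y \<and>
           u1 = x @ wpow y i \<and> u2 = x @ wpow y j"
proof -
  have y: "y \<noteq> []" and prim: "\<forall>t. nspref t y \<longrightarrow> omega [] t \<noteq> omega [] y"
    using sp_prim[OF assms(4)] by blast+
  obtain j1 where j1: "j1 \<ge> 1" "v1 = wpow y j1" using sp_wpow[OF assms(4)] by blast
  obtain j2 where j2: "j2 \<ge> 1" "v2 = wpow y j2" using sp_wpow[OF assms(5)] by blast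
  obtain x1 i1 where x1: "u1 = x1 @ wpow y i1"
    and m1: "\<forall>x' k. u1 = x' @ wpow y k \<longrightarrow> length x1 \<le> length x'"
    using shortest_exists by blast
  obtain x2 i2 where x2: "u2 = x2 @ wpow y i2"
    and m2: "\<forall>x' k. u2 = x' @ wpow y k \<longrightarrow> length x2 \<le> length x'"
    using shortest_exists by blast
  have e1: "omega u1 v1 = omega u1 y" and e2: "omega u2 v2 = omega u2 y"
  proof -
    have "omega [] v1 = omega [] y" "omega [] v2 = omega [] y"
      using assms(4,5) by (auto simp: smallest_period_def)
    then show "omega u1 v1 = omega u1 y" "omega u2 v2 = omega u2 y"
      by (auto simp: fun_eq_iff omega_def)
  qed
  have "omega u1 v1 = omega u2 v2" using assms(2,3) by (simp add: decomposition_def)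
  then have "omega x1 y = omega x2 y"
    using e1 e2 x1 x2 omega_wpow[OF y] by simp
  then have xx: "x1 = x2"
  proof (cases "length x1 \<le> length x2")
    case True
    then show ?thesis using key[OF y prim x2 m2] \<open>omega x1 y = omega x2 y\<close> by blast
  next
    case False
    then show ?thesis using key[OF y prim x1 m1, of x2] \<open>omega x1 y = omega x2 y\<close> by simp
  qed
  have "shortest_form u1 v1 x1 y" unfolding shortest_form_def
    using assms(4) j1 x1 m1 by blast
  moreover have "shortest_form u2 v2 x1 y" unfolding shortest_form_def
    using assms(5) j2 x2 m2 xx by blast
  ultimately show ?thesis using x1 x2 xx by blast
qed

end
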